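(* An integral polynomial $u(t)\in\mathbb{Z}[t]$ is equal to the polynomial $u(\alpha)$ of some virtual string $\alpha$ if and only if $u(0)=u'(1)=0$.
   Context: A virtual string $\alpha$ of rank $m\ge 0$ consists of an oriented circle $S$ (the core circle) together with $2m$ distinct points of $S$ partitioned into $m$ ordered pairs $(a,b)$, called arrows; $a$ is the tail and $b$ the head of the arrow. For distinct $a,b\in S$, $ab$ denotes the arc of $S$ going from $a$ to $b$ in the positive direction. An arrow $f=(c,d)\neq e=(a,b)$ links $e$ positively if $c\in ab$, $d\in ba$, and negatively if $c\in ba$, $d\in ab$. Let $n(e)\in\mathbb{Z}$ be the number of arrows linking $e$ positively minus the number of arrows linking $e$ negatively. For $k\ge1$ set $u_k(\alpha)=\#\{e: n(e)=k\}-\#\{e:n(e)=-k\}$ and $u(\alpha)=\sum_{k\ge1}u_k(\alpha)t^k\in\mathbb{Z}[t]$. *)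

theory Defs
  imports "HOL-Computational_Algebra.Polynomial"
begin

text \<open>The core circle S is modelled as R/Z, points represented by reals in [0,1);
  the positive direction is the direction of increasing parameter.
  An arrow is an ordered pair (tail, head) of points.\<close>

definition circle_pt :: "real \<Rightarrow> bool" where
  "circle_pt x \<longleftrightarrow> 0 \<le> x \<and> x < 1"

definition in_arc :: "real \<Rightarrow> real \<Rightarrow> real \<Rightarrow> bool" where
  "in_arc a b c \<longleftrightarrow> c \<noteq> a \<and> c \<noteq> b \<and> frac (c - a) < frac (b - a)"

definition virtual_string :: "(real \<times> real) set \<Rightarrow> bool" where
  "virtual_string E \<longleftrightarrow> finite E \<and>
     (\<forall>e\<in>E. circle_pt (fst e) \<and> circle_pt (snd e) \<and> fst e \<noteq> snd e) \<and>
     (\<forall>e\<in>E. \<forall>f\<in>E. e \<noteq> f \<longrightarrow> {fst e, snd e} \<inter> {fst f, snd f} = {})"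

definition links_pos :: "real \<times> real \<Rightarrow> real \<times> real \<Rightarrow> bool" where
  "links_pos f e \<longleftrightarrow> in_arc (fst e) (snd e) (fst f) \<and> in_arc (snd e) (fst e) (snd f)"

definition links_neg :: "real \<times> real \<Rightarrow> real \<times> real \<Rightarrow> bool" where
  "links_neg f e \<longleftrightarrow> in_arc (snd e) (fst e) (fst f) \<and> in_arc (fst e) (snd e) (snd f)"

definition n_arrow :: "(real \<times> real) set \<Rightarrow> real \<times> real \<Rightarrow> int" where
  "n_arrow E e = int (card {f\<in>E. f \<noteq> e \<and> links_pos f e})
                 - int (card {f\<in>E. f \<noteq> e \<and> links_neg f e})"

definition u_k :: "(real \<times> real) set \<Rightarrow> nat \<Rightarrow> int" where
  "u_k E k = int (card {e\<in>E. n_arrow E e = int k}) - int (card {e\<in>E. n_arrow E e = - int k})"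

text \<open>u(alpha) = sum over k >= 1 of u_k t^k; since |n(e)| < card E, all u_k with
  k > card E vanish, so the sum may be truncated at card E.\<close>
definition u_poly :: "(real \<times> real) set \<Rightarrow> int poly" where
  "u_poly E = (\<Sum>k\<in>{1..card E}. monom (u_k E k) k)"

end

theory Submission imports Defs begin

lemma frac_circ:
  assumes "circle_pt a" "circle_pt c"
  shows "frac (c - a) = (if a \<le> c then c - a else c - a + 1)"
  using assms unfolding circle_pt_def
  by (auto simp: frac_unique_iff)

lemma in_arc_iff:
  assumes "circle_pt a" "circle_pt b" "circle_pt c"
  shows "in_arc a b c \<longleftrightarrow> (a < b \<and> a < c \<and> c < b) \<or> (b < a \<and> (a < c \<or> c < b))"
  using assms unfolding in_arc_def by (auto simp: frac_circ circle_pt_def)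

lemma links_neg_pos:
  assumes "circle_pt (fst e)" "circle_pt (snd e)" "circle_pt (fst f)" "circle_pt (snd f)"
  shows "links_neg f e \<longleftrightarrow> links_pos e f"
  using assms unfolding links_neg_def links_pos_def by (auto simp: in_arc_iff)

lemma no_link:
  assumes "circle_pt (fst e)" "circle_pt (snd e)" "circle_pt (fst f)" "circle_pt (snd f)"
   and "\<not> (min (fst e) (snd e) < fst f \<and> fst f < max (fst e) (snd e))"
   and "\<not> (min (fst e) (snd e) < snd f \<and> snd f < max (fst e) (snd e))"
  shows "\<not> links_pos f e \<and> \<not> links_neg f e"
  using assms unfolding links_neg_def links_pos_def by (auto simp: in_arc_iff min_def max_def split: if_splits)

lemma filt_eq: "{x\<in>A. P x} = A \<inter> {x. P x}" by blast

lemma card_of_bool: "finite A \<Longrightarrow> int (card {x\<in>A. P x}) = (\<Sum>x\<in>A. of_bool (P x))"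
  by (simp add: filt_eq)

lemma n_le:
  assumes "finite E" shows "\<bar>n_arrow E e\<bar> \<le> int (card E)"
proof -
  have "card {f\<in>E. f \<noteq> e \<and> links_pos f e} \<le> card E" "card {f\<in>E. f \<noteq> e \<and> links_neg f e} \<le> card E"
    using assms by (auto intro: card_mono)
  then show ?thesis unfolding n_arrow_def by linarith
qed

lemma uk_zero:
  assumes "finite E" "k > card E" shows "u_k E k = 0"
proof -
  have "{e\<in>E. n_arrow E e = int k} = {}" "{e\<in>E. n_arrow E e = - int k} = {}"
    using n_le[OF assms(1)] assms(2) by (auto, smt (verit) of_nat_less_iff)+
  then show ?thesis unfolding u_k_def by (metis diff_self)
qed

lemma coeff_u_poly:
  assumes "finite E" shows "coeff (u_poly E) j = (if j = 0 then 0 else u_k E j)"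
  unfolding u_poly_def coeff_sum coeff_monom
  using uk_zero[OF assms, of j] by auto

lemma pderiv_sum: "pderiv (\<Sum>x\<in>A. f x) = (\<Sum>x\<in>A. pderiv (f x))"
  by (induction A rule: infinite_finite_induct) (simp_all add: pderiv_add)

lemma deriv_u_poly:
  "poly (pderiv (u_poly E)) 1 = (\<Sum>k\<in>{1..card E}. int k * u_k E k)"
  unfolding u_poly_def pderiv_sum poly_sum pderiv_monom poly_monom by simp

lemma uk_sum:
  assumes "finite E"
  shows "u_k E k = (\<Sum>e\<in>E. of_bool (n_arrow E e = int k) - of_bool (n_arrow E e = - int k))"
  unfolding u_k_def sum_subtractf using assms by (simp add: card_of_bool)

lemma key_sum:
  assumes "\<bar>z\<bar> \<le> int m"
  shows "(\<Sum>k\<in>{1..m}. int k * (of_bool (z = int k) - of_bool (z = - int k))) = z"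
proof (cases "z \<ge> 0")
  case True
  then obtain n where n: "z = int n" by (metis nonneg_eq_int)
  have "(\<Sum>k\<in>{1..m}. int k * (of_bool (z = int k) - of_bool (z = - int k)))
      = (\<Sum>k\<in>{1..m}. if n = k then int k else 0)"
    by (rule sum.cong) (auto simp: n)
  also have "\<dots> = z" using assms n by auto
  finally show ?thesis .
next
  case False
  then obtain n where n: "z = - int n" "n > 0" by (metis neg_int_cases not_le of_nat_0_less_iff neg_0_less_iff_less)
  have "(\<Sum>k\<in>{1..m}. int k * (of_bool (z = int k) - of_bool (z = - int k)))
      = (\<Sum>k\<in>{1..m}. if n = k then - int k else 0)"
    by (rule sum.cong) (auto simp: n)
  also have "\<dots> = z" using assms n by auto
  finally show ?thesis .
qed

lemma sum_k_uk:
  assumes "finite E"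
  shows "(\<Sum>k\<in>{1..card E}. int k * u_k E k) = (\<Sum>e\<in>E. n_arrow E e)"
proof -
  have "(\<Sum>k\<in>{1..card E}. int k * u_k E k)
     = (\<Sum>k\<in>{1..card E}. \<Sum>e\<in>E. int k * (of_bool (n_arrow E e = int k) - of_bool (n_arrow E e = - int k)))"
    by (simp add: uk_sum[OF assms] sum_distrib_left)
  also have "\<dots> = (\<Sum>e\<in>E. \<Sum>k\<in>{1..card E}. int k * (of_bool (n_arrow E e = int k) - of_bool (n_arrow E e = - int k)))"
    by (rule sum.swap)
  also have "\<dots> = (\<Sum>e\<in>E. n_arrow E e)"
    by (intro sum.cong refl key_sum n_le[OF assms])
  finally show ?thesis .
qed

lemma n_sum:
  assumes "finite E"
  shows "n_arrow E e = (\<Sum>f\<in>E. of_bool (f \<noteq> e \<and> links_pos f e) - of_bool (f \<noteq> e \<and> links_neg f e))"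
  unfolding n_arrow_def sum_subtractf using assms by (simp add: card_of_bool)

lemma sum_n_zero:
  assumes "virtual_string E"
  shows "(\<Sum>e\<in>E. n_arrow E e) = 0"
proof -
  have fin: "finite E" using assms unfolding virtual_string_def by simp
  have cp: "\<And>e. e \<in> E \<Longrightarrow> circle_pt (fst e) \<and> circle_pt (snd e)"
    using assms unfolding virtual_string_def by simp
  have "(\<Sum>e\<in>E. \<Sum>f\<in>E. (of_bool (f \<noteq> e \<and> links_neg f e)::int))
      = (\<Sum>e\<in>E. \<Sum>f\<in>E. (of_bool (e \<noteq> f \<and> links_pos e f)::int))"
    by (intro sum.cong refl) (auto simp: links_neg_pos cp)
  also have "\<dots> = (\<Sum>f\<in>E. \<Sum>e\<in>E. (of_bool (e \<noteq> f \<and> links_pos e f)::int))"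
    by (rule sum.swap)
  finally have eq: "(\<Sum>e\<in>E. \<Sum>f\<in>E. (of_bool (f \<noteq> e \<and> links_neg f e)::int))
      = (\<Sum>e\<in>E. \<Sum>f\<in>E. (of_bool (f \<noteq> e \<and> links_pos f e)::int))" .
  show ?thesis
    unfolding n_sum[OF fin] sum_subtractf eq by simp
qed

lemma forward:
  assumes "virtual_string E"
  shows "poly (u_poly E) 0 = 0 \<and> poly (pderiv (u_poly E)) 1 = 0"
proof -
  have fin: "finite E" using assms unfolding virtual_string_def by simp
  show ?thesis
    using coeff_u_poly[OF fin, of 0] deriv_u_poly[of E] sum_k_uk[OF fin] sum_n_zero[OF assms]
    by (simp add: poly_0_coeff_0)
qed

definition good_map :: "(real \<Rightarrow> real) \<Rightarrow> bool" where
  "good_map \<phi> \<longleftrightarrow> (\<forall>x y. circle_pt x \<longrightarrow> circle_pt y \<longrightarrow> x < y \<longrightarrow> \<phi> x < \<phi> y)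
     \<and> (\<forall>x. circle_pt x \<longrightarrow> circle_pt (\<phi> x))"

lemma good_less: "good_map \<phi> \<Longrightarrow> circle_pt x \<Longrightarrow> circle_pt y \<Longrightarrow> \<phi> x < \<phi> y \<longleftrightarrow> x < y"
  unfolding good_map_def by (metis linorder_neq_iff order_less_asym)

lemma good_eq: "good_map \<phi> \<Longrightarrow> circle_pt x \<Longrightarrow> circle_pt y \<Longrightarrow> \<phi> x = \<phi> y \<longleftrightarrow> x = y"
  unfolding good_map_def by (metis linorder_neq_iff order_less_irrefl)

lemma good_cp: "good_map \<phi> \<Longrightarrow> circle_pt x \<Longrightarrow> circle_pt (\<phi> x)"
  unfolding good_map_def by blast

lemma in_arc_map:
  assumes "good_map \<phi>" "circle_pt a" "circle_pt b" "circle_pt c"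
  shows "in_arc (\<phi> a) (\<phi> b) (\<phi> c) \<longleftrightarrow> in_arc a b c"
  using assms by (simp add: in_arc_iff good_cp good_less)

lemma vs_cp: "virtual_string E \<Longrightarrow> e \<in> E \<Longrightarrow> circle_pt (fst e) \<and> circle_pt (snd e)"
  unfolding virtual_string_def by blast

lemma vs_fin: "virtual_string E \<Longrightarrow> finite E"
  unfolding virtual_string_def by blast

lemma map_links:
  assumes "good_map \<phi>" "virtual_string E" "e \<in> E" "f \<in> E"
  shows "links_pos (map_prod \<phi> \<phi> f) (map_prod \<phi> \<phi> e) \<longleftrightarrow> links_pos f e"
    and "links_neg (map_prod \<phi> \<phi> f) (map_prod \<phi> \<phi> e) \<longleftrightarrow> links_neg f e"
  using assms vs_cp[OF assms(2) assms(3)] vs_cp[OF assms(2) assms(4)]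
  by (simp_all add: links_pos_def links_neg_def map_prod_def split_beta in_arc_map)

lemma map_inj:
  assumes "good_map \<phi>" "virtual_string E"
  shows "inj_on (map_prod \<phi> \<phi>) E"
proof
  fix e f assume "e \<in> E" "f \<in> E" "map_prod \<phi> \<phi> e = map_prod \<phi> \<phi> f"
  then show "e = f" using vs_cp[OF assms(2)] good_eq[OF assms(1)]
    by (cases e; cases f) auto
qed

lemma map_vs:
  assumes "good_map \<phi>" "virtual_string E"
  shows "virtual_string (map_prod \<phi> \<phi> ` E)"
  unfolding virtual_string_def
proof (intro conjI ballI impI)
  show "finite (map_prod \<phi> \<phi> ` E)" using vs_fin[OF assms(2)] by simp
next
  fix e assume "e \<in> map_prod \<phi> \<phi> ` E"
  then obtain a b where ab: "(a,b) \<in> E" "e = (\<phi> a, \<phi> b)" by auto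
  have "circle_pt a" "circle_pt b" "a \<noteq> b" using ab assms(2) unfolding virtual_string_def by auto
  then show "circle_pt (fst e)" "circle_pt (snd e)" "fst e \<noteq> snd e"
    using ab good_cp[OF assms(1)] good_eq[OF assms(1)] by auto
next
  fix e f assume "e \<in> map_prod \<phi> \<phi> ` E" "f \<in> map_prod \<phi> \<phi> ` E" "e \<noteq> f"
  then obtain a b c d where ab: "(a,b) \<in> E" "e = (\<phi> a, \<phi> b)" "(c,d) \<in> E" "f = (\<phi> c, \<phi> d)" by auto
  then have ne: "(a,b) \<noteq> (c,d)" using \<open>e \<noteq> f\<close> by auto
  have "{a,b} \<inter> {c,d} = {}" using ab ne assms(2) unfolding virtual_string_def by (metis fst_conv snd_conv)
  moreover have "circle_pt a" "circle_pt b" "circle_pt c" "circle_pt d" using ab assms(2) unfolding virtual_string_def by auto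
  ultimately show "{fst e, snd e} \<inter> {fst f, snd f} = {}"
    using ab good_eq[OF assms(1)] by auto
qed

lemma image_filter: "{g\<in>h ` E. P g} = h ` {f\<in>E. P (h f)}" by auto

lemma map_n:
  assumes "good_map \<phi>" "virtual_string E" "e \<in> E"
  shows "n_arrow (map_prod \<phi> \<phi> ` E) (map_prod \<phi> \<phi> e) = n_arrow E e"
proof -
  let ?h = "map_prod \<phi> \<phi>"
  have inj: "inj_on ?h E" by (rule map_inj[OF assms(1,2)])
  have gen: "{g\<in>?h ` E. P g} = ?h ` {f\<in>E. P (?h f)}" for P by (rule image_filter)
  have "{f\<in>E. ?h f \<noteq> ?h e \<and> links_pos (?h f) (?h e)} = {f\<in>E. f \<noteq> e \<and> links_pos f e}"
    using inj_on_eq_iff[OF inj _ assms(3)] map_links[OF assms(1,2,3)] by blast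
  moreover have "{f\<in>E. ?h f \<noteq> ?h e \<and> links_neg (?h f) (?h e)} = {f\<in>E. f \<noteq> e \<and> links_neg f e}"
    using inj_on_eq_iff[OF inj _ assms(3)] map_links[OF assms(1,2,3)] by blast
  ultimately have "{g\<in>?h ` E. g \<noteq> ?h e \<and> links_pos g (?h e)} = ?h ` {f\<in>E. f \<noteq> e \<and> links_pos f e}"
     "{g\<in>?h ` E. g \<noteq> ?h e \<and> links_neg g (?h e)} = ?h ` {f\<in>E. f \<noteq> e \<and> links_neg f e}"
    unfolding gen by simp_all
  then show ?thesis unfolding n_arrow_def
    by (simp add: card_image inj_on_subset[OF inj])
qed

lemma map_uk:
  assumes "good_map \<phi>" "virtual_string E"
  shows "u_k (map_prod \<phi> \<phi> ` E) k = u_k E k"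
proof -
  let ?h = "map_prod \<phi> \<phi>"
  have inj: "inj_on ?h E" by (rule map_inj[OF assms(1,2)])
  have "{g\<in>?h ` E. n_arrow (?h ` E) g = z} = ?h ` {e\<in>E. n_arrow E e = z}" for z
    using map_n[OF assms(1,2)] by auto
  then show ?thesis unfolding u_k_def
    by (simp add: card_image inj_on_subset[OF inj])
qed

lemma map_u_poly:
  assumes "good_map \<phi>" "virtual_string E"
  shows "u_poly (map_prod \<phi> \<phi> ` E) = u_poly E"
  using coeff_u_poly[OF vs_fin[OF assms(2)]] coeff_u_poly[OF vs_fin[OF map_vs[OF assms]]]
    map_uk[OF assms] by (simp add: poly_eq_iff)

definition lo_half :: "(real \<times> real) set \<Rightarrow> bool" where
  "lo_half E \<longleftrightarrow> (\<forall>e\<in>E. fst e < 1/2 \<and> snd e < 1/2)"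
definition hi_half :: "(real \<times> real) set \<Rightarrow> bool" where
  "hi_half E \<longleftrightarrow> (\<forall>e\<in>E. fst e \<ge> 1/2 \<and> snd e \<ge> 1/2)"

lemma union_vs:
  assumes "virtual_string E1" "virtual_string E2" "lo_half E1" "hi_half E2"
  shows "virtual_string (E1 \<union> E2)"
  unfolding virtual_string_def
proof (intro conjI ballI impI)
  show "finite (E1 \<union> E2)" using assms(1,2) vs_fin by auto
next
  fix e assume "e \<in> E1 \<union> E2"
  then show "circle_pt (fst e)" "circle_pt (snd e)" "fst e \<noteq> snd e"
    using assms(1,2) unfolding virtual_string_def by auto
next
  fix e f assume ef: "e \<in> E1 \<union> E2" "f \<in> E1 \<union> E2" "e \<noteq> f"
  have sep: "{fst e, snd e} \<inter> {fst f, snd f} = {}" if "e \<in> E1" "f \<in> E2" for e f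
  proof -
    have "fst e < 1/2" "snd e < 1/2" "fst f \<ge> 1/2" "snd f \<ge> 1/2"
      using that assms(3,4) unfolding lo_half_def hi_half_def by auto
    then show ?thesis by auto
  qed
  show "{fst e, snd e} \<inter> {fst f, snd f} = {}"
  proof (cases "e \<in> E1")
    case True
    show ?thesis
    proof (cases "f \<in> E1")
      case True
      then show ?thesis using \<open>e \<in> E1\<close> ef(3) assms(1) unfolding virtual_string_def by blast
    next
      case False
      then show ?thesis using True ef sep by blast
    qed
  next
    case False
    then have e2: "e \<in> E2" using ef by blast
    show ?thesis
    proof (cases "f \<in> E1")
      case True
      then show ?thesis using e2 sep[of f e] by blast
    next
      case False
      then show ?thesis using e2 ef assms(2) unfolding virtual_string_def by blast
    qed
  qed
qed

lemma union_n1: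
  assumes "virtual_string E1" "virtual_string E2" "lo_half E1" "hi_half E2" "e \<in> E1"
  shows "n_arrow (E1 \<union> E2) e = n_arrow E1 e"
proof -
  have nl: "\<not> links_pos f e \<and> \<not> links_neg f e" if "f \<in> E2" for f
  proof -
    have "fst e < 1/2" "snd e < 1/2" "fst f \<ge> 1/2" "snd f \<ge> 1/2"
      using that assms(3,4,5) unfolding lo_half_def hi_half_def by auto
    then show ?thesis using that assms vs_cp[OF assms(1)] vs_cp[OF assms(2)]
      by (intro no_link) (auto simp: min_def max_def)
  qed
  have "{f\<in>E1 \<union> E2. f \<noteq> e \<and> links_pos f e} = {f\<in>E1. f \<noteq> e \<and> links_pos f e}"
       "{f\<in>E1 \<union> E2. f \<noteq> e \<and> links_neg f e} = {f\<in>E1. f \<noteq> e \<and> links_neg f e}"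
    using nl by auto
  then show ?thesis unfolding n_arrow_def by simp
qed

lemma union_n2:
  assumes "virtual_string E1" "virtual_string E2" "lo_half E1" "hi_half E2" "e \<in> E2"
  shows "n_arrow (E1 \<union> E2) e = n_arrow E2 e"
proof -
  have nl: "\<not> links_pos f e \<and> \<not> links_neg f e" if "f \<in> E1" for f
  proof -
    have "fst e \<ge> 1/2" "snd e \<ge> 1/2" "fst f < 1/2" "snd f < 1/2"
      using that assms(3,4,5) unfolding lo_half_def hi_half_def by auto
    then show ?thesis using that assms vs_cp[OF assms(1)] vs_cp[OF assms(2)]
      by (intro no_link) (auto simp: min_def max_def)
  qed
  have "{f\<in>E1 \<union> E2. f \<noteq> e \<and> links_pos f e} = {f\<in>E2. f \<noteq> e \<and> links_pos f e}"
       "{f\<in>E1 \<union> E2. f \<noteq> e \<and> links_neg f e} = {f\<in>E2. f \<noteq> e \<and> links_neg f e}"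
    using nl by auto
  then show ?thesis unfolding n_arrow_def by simp
qed

lemma union_uk:
  assumes "virtual_string E1" "virtual_string E2" "lo_half E1" "hi_half E2"
  shows "u_k (E1 \<union> E2) k = u_k E1 k + u_k E2 k"
proof -
  have disj: "E1 \<inter> E2 = {}" using assms(3,4) unfolding lo_half_def hi_half_def by fastforce
  have fin: "finite E1" "finite E2" using assms(1,2) vs_fin by auto
  have eq: "{e\<in>E1 \<union> E2. n_arrow (E1 \<union> E2) e = z} = {e\<in>E1. n_arrow E1 e = z} \<union> {e\<in>E2. n_arrow E2 e = z}" for z
    using union_n1[OF assms] union_n2[OF assms] by auto
  have c: "card ({e\<in>E1. n_arrow E1 e = z} \<union> {e\<in>E2. n_arrow E2 e = z})
      = card {e\<in>E1. n_arrow E1 e = z} + card {e\<in>E2. n_arrow E2 e = z}" for z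
    using disj fin by (intro card_Un_disjoint) auto
  show ?thesis unfolding u_k_def eq c by simp
qed

lemma union_u_poly:
  assumes "virtual_string E1" "virtual_string E2" "lo_half E1" "hi_half E2"
  shows "u_poly (E1 \<union> E2) = u_poly E1 + u_poly E2"
  using coeff_u_poly[OF vs_fin[OF assms(1)]] coeff_u_poly[OF vs_fin[OF assms(2)]]
    coeff_u_poly[OF vs_fin[OF union_vs[OF assms]]] union_uk[OF assms]
  by (simp add: poly_eq_iff)

definition realizable :: "int poly \<Rightarrow> bool" where
  "realizable p \<longleftrightarrow> (\<exists>E. virtual_string E \<and> u_poly E = p)"

lemma realizable_add:
  assumes "realizable p" "realizable q" shows "realizable (p + q)"
proof -
  obtain E1 E2 where E: "virtual_string E1" "u_poly E1 = p" "virtual_string E2" "u_poly E2 = q"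
    using assms unfolding realizable_def by blast
  define \<phi>1 :: "real \<Rightarrow> real" where "\<phi>1 x = x / 2" for x
  define \<phi>2 :: "real \<Rightarrow> real" where "\<phi>2 x = (x + 1) / 2" for x
  have g1: "good_map \<phi>1" and g2: "good_map \<phi>2"
    unfolding good_map_def \<phi>1_def \<phi>2_def circle_pt_def by auto
  let ?F1 = "map_prod \<phi>1 \<phi>1 ` E1" and ?F2 = "map_prod \<phi>2 \<phi>2 ` E2"
  have v1: "virtual_string ?F1" and v2: "virtual_string ?F2" using map_vs g1 g2 E by auto
  have l: "lo_half ?F1" using vs_cp[OF E(1)] unfolding lo_half_def \<phi>1_def circle_pt_def by auto
  have h: "hi_half ?F2" using vs_cp[OF E(3)] unfolding hi_half_def \<phi>2_def circle_pt_def by auto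
  have "virtual_string (?F1 \<union> ?F2)" "u_poly (?F1 \<union> ?F2) = p + q"
    using union_vs[OF v1 v2 l h] union_u_poly[OF v1 v2 l h] map_u_poly g1 g2 E by auto
  then show ?thesis unfolding realizable_def by blast
qed

lemma realizable_0: "realizable 0"
  unfolding realizable_def
  by (rule exI[of _ "{}"]) (simp add: virtual_string_def u_poly_def)

definition pt :: "nat \<Rightarrow> nat \<Rightarrow> real" where
  "pt K i = real i / real (2*K+2)"

lemma pt_less[simp]: "pt K i < pt K j \<longleftrightarrow> i < j"
  unfolding pt_def by (simp add: divide_less_cancel)

lemma pt_eq[simp]: "pt K i = pt K j \<longleftrightarrow> i = j"
  unfolding pt_def by (simp add: divide_cancel_right)

lemma pt_cp[simp]: "circle_pt (pt K i) \<longleftrightarrow> i < 2*K+2"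
  unfolding pt_def circle_pt_def using of_nat_less_iff[of i "2*K+2", where ?'a = real] by (simp add: divide_less_eq)

definition blk_e :: "nat \<Rightarrow> bool \<Rightarrow> real \<times> real" where
  "blk_e K s = (if s then (pt K 0, pt K (K+1)) else (pt K (K+1), pt K 0))"
definition blk_f :: "nat \<Rightarrow> nat \<Rightarrow> real \<times> real" where
  "blk_f K i = (pt K i, pt K (2*K+2-i))"
definition blk :: "nat \<Rightarrow> bool \<Rightarrow> (real \<times> real) set" where
  "blk K s = insert (blk_e K s) (blk_f K ` {1..K})"

lemma in_arc_pt:
  assumes "a < 2*K+2" "b < 2*K+2" "c < 2*K+2"
  shows "in_arc (pt K a) (pt K b) (pt K c) \<longleftrightarrow> (a < b \<and> a < c \<and> c < b) \<or> (b < a \<and> (a < c \<or> c < b))"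
  using assms by (simp add: in_arc_iff)

lemma blk_links:
  assumes "i \<in> {1..K}"
  shows "links_pos (blk_f K i) (blk_e K s) \<longleftrightarrow> s"
    and "links_neg (blk_f K i) (blk_e K s) \<longleftrightarrow> \<not> s"
    and "links_pos (blk_e K s) (blk_f K i) \<longleftrightarrow> \<not> s"
    and "links_neg (blk_e K s) (blk_f K i) \<longleftrightarrow> s"
  using assms by (auto simp: links_pos_def links_neg_def blk_e_def blk_f_def in_arc_pt)

lemma blk_links_ff:
  assumes "i \<in> {1..K}" "j \<in> {1..K}" "i \<noteq> j"
  shows "\<not> links_pos (blk_f K j) (blk_f K i) \<and> \<not> links_neg (blk_f K j) (blk_f K i)"
  using assms by (auto simp: links_pos_def links_neg_def blk_f_def in_arc_pt)

lemma blk_e_notin: "blk_e K s \<notin> blk_f K ` {1..K}"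
  by (auto simp: blk_e_def blk_f_def)

lemma blk_f_inj: "inj_on (blk_f K) {1..K}"
  by (auto simp: inj_on_def blk_f_def)

lemma blk_vs: "virtual_string (blk K s)"
  unfolding virtual_string_def blk_def
  by (auto simp: blk_e_def blk_f_def)

lemma blk_n_e:
  assumes "K \<ge> 1"
  shows "n_arrow (blk K s) (blk_e K s) = (if s then int K else - int K)"
proof -
  have "{f\<in>blk K s. f \<noteq> blk_e K s \<and> links_pos f (blk_e K s)} = (if s then blk_f K ` {1..K} else {})"
    "{f\<in>blk K s. f \<noteq> blk_e K s \<and> links_neg f (blk_e K s)} = (if s then {} else blk_f K ` {1..K})"
    unfolding blk_def using blk_links(1,2)[of _ K s] blk_e_notin[of K s] by auto
  then show ?thesis unfolding n_arrow_def using card_image[OF blk_f_inj[of K]] by simp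
qed

lemma blk_n_f:
  assumes "i \<in> {1..K}"
  shows "n_arrow (blk K s) (blk_f K i) = (if s then -1 else 1)"
proof -
  have "{f\<in>blk K s. f \<noteq> blk_f K i \<and> links_pos f (blk_f K i)} = (if s then {} else {blk_e K s})"
    "{f\<in>blk K s. f \<noteq> blk_f K i \<and> links_neg f (blk_f K i)} = (if s then {blk_e K s} else {})"
  proof -
    have ne: "blk_e K s \<noteq> blk_f K i" using blk_e_notin[of K s] assms by blast
    have fp: "\<And>j. j \<in> {1..K} \<Longrightarrow> blk_f K j \<noteq> blk_f K i \<Longrightarrow> \<not> links_pos (blk_f K j) (blk_f K i)"
      and fn: "\<And>j. j \<in> {1..K} \<Longrightarrow> blk_f K j \<noteq> blk_f K i \<Longrightarrow> \<not> links_neg (blk_f K j) (blk_f K i)"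
      using blk_links_ff[OF assms] by blast+
    show "{f\<in>blk K s. f \<noteq> blk_f K i \<and> links_pos f (blk_f K i)} = (if s then {} else {blk_e K s})"
      unfolding blk_def using blk_links(3)[OF assms, of s] ne fp by auto
    show "{f\<in>blk K s. f \<noteq> blk_f K i \<and> links_neg f (blk_f K i)} = (if s then {blk_e K s} else {})"
      unfolding blk_def using blk_links(4)[OF assms, of s] ne fn by auto
  qed
  then show ?thesis unfolding n_arrow_def by simp
qed

lemma blk_uk:
  assumes "K \<ge> 1" "j \<ge> 1"
  shows "u_k (blk K s) j = (if s then 1 else -1) * (of_bool (j = K) - int K * of_bool (j = 1))"
proof -
  have fin: "finite (blk K s)" using blk_vs vs_fin by blast
  let ?w = "\<lambda>z::int. (of_bool (z = int j) - of_bool (z = - int j))::int"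
  have "u_k (blk K s) j = (\<Sum>g\<in>blk K s. ?w (n_arrow (blk K s) g))"
    by (rule uk_sum[OF fin])
  also have "\<dots> = ?w (n_arrow (blk K s) (blk_e K s)) + (\<Sum>g\<in>blk_f K ` {1..K}. ?w (n_arrow (blk K s) g))"
    unfolding blk_def using blk_e_notin[of K s] by (simp add: sum.insert)
  also have "(\<Sum>g\<in>blk_f K ` {1..K}. ?w (n_arrow (blk K s) g)) = (\<Sum>i\<in>{1..K}. ?w (n_arrow (blk K s) (blk_f K i)))"
    by (rule sum.reindex[OF blk_f_inj, unfolded comp_def])
  also have "\<dots> = (\<Sum>i\<in>{1..K}. ?w (if s then -1 else 1))"
    by (rule sum.cong) (simp_all add: blk_n_f)
  finally show ?thesis using assms by (simp add: blk_n_e)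
qed

definition G :: "nat \<Rightarrow> int poly" where
  "G K = monom 1 K - monom (int K) 1"

lemma blk_u_poly:
  assumes "K \<ge> 1"
  shows "u_poly (blk K s) = smult (if s then 1 else -1) (G K)"
proof (rule poly_eqI)
  fix j
  have fin: "finite (blk K s)" using blk_vs vs_fin by blast
  show "coeff (u_poly (blk K s)) j = coeff (smult (if s then 1 else -1) (G K)) j"
    using assms blk_uk[OF assms, of j s] unfolding coeff_u_poly[OF fin] G_def
    by (auto simp: coeff_monom)
qed

lemma realizable_G: "K \<ge> 1 \<Longrightarrow> realizable (G K)" "K \<ge> 1 \<Longrightarrow> realizable (- G K)"
  unfolding realizable_def using blk_vs blk_u_poly[of K True] blk_u_poly[of K False] by auto

lemma realizable_smult_nat: "realizable g \<Longrightarrow> realizable (smult (int m) g)"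
proof (induction m)
  case 0 then show ?case by (simp add: realizable_0)
next
  case (Suc m)
  have "smult (int (Suc m)) g = g + smult (int m) g" by (simp add: smult_add_left)
  then show ?case using Suc realizable_add by simp
qed

lemma realizable_smult_G:
  assumes "K \<ge> 1" shows "realizable (smult a (G K))"
proof (cases "a \<ge> 0")
  case True
  then have "smult a (G K) = smult (int (nat a)) (G K)" by simp
  then show ?thesis using realizable_smult_nat realizable_G(1)[OF assms] by metis
next
  case False
  then have "smult a (G K) = smult (int (nat (-a))) (- G K)" by simp
  then show ?thesis using realizable_smult_nat realizable_G(2)[OF assms] by metis
qed

lemma coeff_G: "coeff (G K) j = of_bool (K = j) - int K * of_bool (j = 1)"
  unfolding G_def by (auto simp: coeff_monom)

lemma degree_G: "degree (G K) \<le> K"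
proof (cases "K = 0")
  case True then show ?thesis by (simp add: G_def)
next
  case False
  then show ?thesis unfolding G_def
    by (intro degree_diff_le degree_monom_le order_trans[OF degree_monom_le]) simp
qed

lemma pderiv_G_1: "poly (pderiv (G K)) 1 = 0"
  unfolding G_def pderiv_diff pderiv_monom by (simp add: poly_monom)

lemma backward_aux:
  "degree p = n \<Longrightarrow> poly p 0 = 0 \<Longrightarrow> poly (pderiv p) 1 = 0 \<Longrightarrow> realizable p"
proof (induction n arbitrary: p rule: less_induct)
  case (less n)
  show ?case
  proof (cases "n \<le> 1")
    case True
    have c0: "coeff p 0 = 0" using less.prems(2) by (simp add: poly_0_coeff_0)
    have "pderiv p = [:coeff p 1:]"
    proof (rule poly_eqI)
      fix j show "coeff (pderiv p) j = coeff [:coeff p 1:] j"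
        using coeff_eq_0[of p "Suc j"] True less.prems(1)
        by (cases j) (auto simp: coeff_pderiv)
    qed
    then have "poly (pderiv p) 1 = coeff p 1" by simp
    then have c1: "coeff p 1 = 0" using less.prems(3) by simp
    have "p = 0"
    proof (rule poly_eqI)
      fix j show "coeff p j = coeff 0 j"
        using c0 c1 coeff_eq_0[of p j] True less.prems(1)
        by (cases "j = 0"; cases "j = 1") auto
    qed
    then show ?thesis by (simp add: realizable_0)
  next
    case False
    define a where "a = coeff p n"
    define q where "q = p - smult a (G n)"
    have dq: "degree q \<le> n" unfolding q_def using degree_G[of n] less.prems(1)
      by (intro degree_diff_le order_trans[OF degree_smult_le]) simp_all
    have cq: "coeff q n = 0" unfolding q_def a_def using False by (simp add: coeff_G)
    have dq': "degree q < n"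
    proof (cases "q = 0")
      case True then show ?thesis using False by simp
    next
      case qn: False
      then have "coeff q (degree q) \<noteq> 0" by simp
      then show ?thesis using dq cq by (metis le_neq_implies_less)
    qed
    have q0: "poly q 0 = 0" using less.prems(2) False
      unfolding q_def by (simp add: poly_0_coeff_0 coeff_G)
    have q1: "poly (pderiv q) 1 = 0" using less.prems(3)
      unfolding q_def pderiv_diff pderiv_smult by (simp add: pderiv_G_1)
    have "realizable q" using less.IH[OF dq' refl q0 q1] .
    moreover have "realizable (smult a (G n))" using False by (intro realizable_smult_G) simp
    ultimately have "realizable (q + smult a (G n))" by (rule realizable_add)
    then show ?thesis unfolding q_def by simp
  qed
qed

theorem theorem3p1:
  fixes p :: "int poly"
  shows "(\<exists>E. virtual_string E \<and> u_poly E = p) \<longleftrightarrow>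
         poly p 0 = 0 \<and> poly (pderiv p) 1 = 0"
proof
  assume "\<exists>E. virtual_string E \<and> u_poly E = p"
  then show "poly p 0 = 0 \<and> poly (pderiv p) 1 = 0" using forward by blast
next
  assume "poly p 0 = 0 \<and> poly (pderiv p) 1 = 0"
  then have "realizable p" using backward_aux by blast
  then show "\<exists>E. virtual_string E \<and> u_poly E = p" unfolding realizable_def .
qed

end
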